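(* Assume the standing setting and the type II decomposition for a type II edge $e=uw$. Then $U_1\neq\emptyset$, $W_2\neq\emptyset$, $|U_1|\ge|W_1|$ and $|W_2|\ge|U_2|$.
   Context: Graphs may have multiple edges but no loops. An edge is admissible if it lies in some perfect matching; a connected graph with at least two vertices is matching covered if every edge is admissible; an edge $e$ of a matching covered graph $G$ is removable if $G-e$ is matching covered, and nonremovable otherwise. A brick is a 3-connected nonbipartite graph $G$ such that $G-x-y$ has a perfect matching for all distinct $x,y$. A nonbipartite matching covered graph $G$ is near-bipartite if it has a pair of edges $\{e_1,e_2\}$ (a removable doubleton) such that $G-\{e_1,e_2\}$ is bipartite matching covered. For a graph with a perfect matching, a nonempty vertex set $S$ is a barrier if the number of odd components of $G-S$ equals $|S|$. Standing setting: $G$ is a near-bipartite brick with removable doubleton $\{e_1,e_2\}$, $H=G-\{e_1,e_2\}$, and $(U,W)$ is the bipartition of $H$, labelled so that both ends of $e_1$ lie in $U$ and both ends of $e_2$ lie in $W$. A nonremovable edge $e\notin\{e_1,e_2\}$ of $G$ is of type II if $e$ is nonremovable in $H$. Type II decomposition: let $e=uw$ be of type II with $u\in U$, $w\in W$. There is an edge $e^*$ of $G-e$ that is nonadmissible both in $G-e$ and in $H-e$; fix such $e^*$ and an inclusion-maximal barrier $B$ of $G-e$ containing both ends of $e^*$. Let $U_1=B\cap U$, $W_2=B\cap W$, and let $U_2$ (resp. $W_1$) be the set of vertices of $U$ (resp. $W$) that form single-vertex components of $G-e-B$. *)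

theory Defs
  imports Main
begin

text \<open>A graph is given by a vertex set V, an
edge set E (edges are abstract objects of type 'e, so parallel edges are allowed),
and a fixed endpoint map ends, which assigns to each edge its two-element set of ends.
Subgraphs obtained by deleting edges/vertices keep the same endpoint map.\<close>

definition multigraph :: "('e \<Rightarrow> 'a set) \<Rightarrow> 'a set \<Rightarrow> 'e set \<Rightarrow> bool" where
  "multigraph ends V E \<longleftrightarrow> finite V \<and> finite E \<and>
     (\<forall>e\<in>E. card (ends e) = 2 \<and> ends e \<subseteq> V)"

definition avoid :: "('e \<Rightarrow> 'a set) \<Rightarrow> 'e set \<Rightarrow> 'a set \<Rightarrow> 'e set" where
  "avoid ends E S = {e\<in>E. ends e \<inter> S = {}}"

definition perfect_matching :: "('e \<Rightarrow> 'a set) \<Rightarrow> 'a set \<Rightarrow> 'e set \<Rightarrow> 'e set \<Rightarrow> bool" where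
  "perfect_matching ends V E M \<longleftrightarrow> M \<subseteq> E \<and> (\<forall>v\<in>V. \<exists>!e. e \<in> M \<and> v \<in> ends e)"

definition has_perfect_matching :: "('e \<Rightarrow> 'a set) \<Rightarrow> 'a set \<Rightarrow> 'e set \<Rightarrow> bool" where
  "has_perfect_matching ends V E \<longleftrightarrow> (\<exists>M. perfect_matching ends V E M)"

definition admissible :: "('e \<Rightarrow> 'a set) \<Rightarrow> 'a set \<Rightarrow> 'e set \<Rightarrow> 'e \<Rightarrow> bool" where
  "admissible ends V E e \<longleftrightarrow> e \<in> E \<and> (\<exists>M. perfect_matching ends V E M \<and> e \<in> M)"

definition adj :: "('e \<Rightarrow> 'a set) \<Rightarrow> 'a set \<Rightarrow> 'e set \<Rightarrow> 'a \<Rightarrow> 'a \<Rightarrow> bool" where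
  "adj ends V E x y \<longleftrightarrow> x \<in> V \<and> y \<in> V \<and> (\<exists>e\<in>E. ends e = {x, y})"

definition reach :: "('e \<Rightarrow> 'a set) \<Rightarrow> 'a set \<Rightarrow> 'e set \<Rightarrow> 'a \<Rightarrow> 'a \<Rightarrow> bool" where
  "reach ends V E = (adj ends V E)\<^sup>*\<^sup>*"

definition connected_graph :: "('e \<Rightarrow> 'a set) \<Rightarrow> 'a set \<Rightarrow> 'e set \<Rightarrow> bool" where
  "connected_graph ends V E \<longleftrightarrow> V \<noteq> {} \<and> (\<forall>x\<in>V. \<forall>y\<in>V. reach ends V E x y)"

definition components :: "('e \<Rightarrow> 'a set) \<Rightarrow> 'a set \<Rightarrow> 'e set \<Rightarrow> 'a set set" where
  "components ends V E = {{y\<in>V. reach ends V E x y} | x. x \<in> V}"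

definition matching_covered :: "('e \<Rightarrow> 'a set) \<Rightarrow> 'a set \<Rightarrow> 'e set \<Rightarrow> bool" where
  "matching_covered ends V E \<longleftrightarrow> connected_graph ends V E \<and> card V \<ge> 2 \<and>
     (\<forall>e\<in>E. admissible ends V E e)"

definition removable :: "('e \<Rightarrow> 'a set) \<Rightarrow> 'a set \<Rightarrow> 'e set \<Rightarrow> 'e \<Rightarrow> bool" where
  "removable ends V E e \<longleftrightarrow> e \<in> E \<and> matching_covered ends V (E - {e})"

definition nonremovable :: "('e \<Rightarrow> 'a set) \<Rightarrow> 'a set \<Rightarrow> 'e set \<Rightarrow> 'e \<Rightarrow> bool" where
  "nonremovable ends V E e \<longleftrightarrow> e \<in> E \<and> \<not> matching_covered ends V (E - {e})"

definition bipartition :: "('e \<Rightarrow> 'a set) \<Rightarrow> 'a set \<Rightarrow> 'e set \<Rightarrow> 'a set \<Rightarrow> 'a set \<Rightarrow> bool" where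
  "bipartition ends V E U W \<longleftrightarrow> U \<inter> W = {} \<and> U \<union> W = V \<and>
     (\<forall>e\<in>E. \<exists>u\<in>U. \<exists>w\<in>W. ends e = {u, w})"

definition bipartite :: "('e \<Rightarrow> 'a set) \<Rightarrow> 'a set \<Rightarrow> 'e set \<Rightarrow> bool" where
  "bipartite ends V E \<longleftrightarrow> (\<exists>U W. bipartition ends V E U W)"

definition k_connected :: "nat \<Rightarrow> ('e \<Rightarrow> 'a set) \<Rightarrow> 'a set \<Rightarrow> 'e set \<Rightarrow> bool" where
  "k_connected k ends V E \<longleftrightarrow> card V > k \<and>
     (\<forall>S. S \<subseteq> V \<and> card S < k \<longrightarrow> connected_graph ends (V - S) (avoid ends E S))"

definition brick :: "('e \<Rightarrow> 'a set) \<Rightarrow> 'a set \<Rightarrow> 'e set \<Rightarrow> bool" where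
  "brick ends V E \<longleftrightarrow> k_connected 3 ends V E \<and> \<not> bipartite ends V E \<and>
     (\<forall>x\<in>V. \<forall>y\<in>V. x \<noteq> y \<longrightarrow>
        has_perfect_matching ends (V - {x, y}) (avoid ends E {x, y}))"

definition removable_doubleton :: "('e \<Rightarrow> 'a set) \<Rightarrow> 'a set \<Rightarrow> 'e set \<Rightarrow> 'e \<Rightarrow> 'e \<Rightarrow> bool" where
  "removable_doubleton ends V E e1 e2 \<longleftrightarrow> matching_covered ends V E \<and> \<not> bipartite ends V E \<and>
     e1 \<in> E \<and> e2 \<in> E \<and> e1 \<noteq> e2 \<and>
     bipartite ends V (E - {e1, e2}) \<and> matching_covered ends V (E - {e1, e2})"

definition barrier :: "('e \<Rightarrow> 'a set) \<Rightarrow> 'a set \<Rightarrow> 'e set \<Rightarrow> 'a set \<Rightarrow> bool" where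
  "barrier ends V E S \<longleftrightarrow> S \<noteq> {} \<and> S \<subseteq> V \<and>
     card {C \<in> components ends (V - S) (avoid ends E S). odd (card C)} = card S"

end

theory Submission
  imports Defs
begin

lemma path_exit:
  assumes "r\<^sup>*\<^sup>* x z" "P x" "\<not> P z"
  shows "\<exists>a b. r a b \<and> P a \<and> \<not> P b"
  using assms by (induction rule: rtranclp_induct) auto

lemma bip_side:
  assumes "U \<inter> W = {}" "{x,y} = {u',w'}" "u' \<in> U" "w' \<in> W" "x \<in> W"
  shows "y = u' \<and> x = w'"
  using assms by (auto simp: doubleton_eq_iff)

lemma bip_edge:
  assumes bp: "bipartition ends V F U W" and f: "f \<in> F" and ef: "ends f = {x,y}" and x: "x \<in> W"
  shows "y \<in> U \<and> x \<noteq> y"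
proof -
  from bp f obtain u' w' where "u' \<in> U" "w' \<in> W" "ends f = {u',w'}" and d: "U \<inter> W = {}"
    unfolding bipartition_def by blast
  hence "y = u' \<and> x = w'" using bip_side[of U W x y u' w'] ef x by simp
  thus ?thesis using d \<open>u' \<in> U\<close> \<open>w' \<in> W\<close> by blast
qed

lemma bipartition_swap:
  assumes "bipartition ends V F U W" shows "bipartition ends V F W U"
proof -
  have "\<forall>e\<in>F. \<exists>w\<in>W. \<exists>u\<in>U. ends e = {w, u}"
    using assms unfolding bipartition_def by (metis insert_commute)
  thus ?thesis using assms unfolding bipartition_def by blast
qed

lemma uniq: "\<exists>!m. P m \<Longrightarrow> P a \<Longrightarrow> P b \<Longrightarrow> a = b" by blast

lemma hall_strict:
  assumes mc: "matching_covered ends V F" and bp: "bipartition ends V F U W"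
    and fin: "finite V" and XW: "X \<subseteq> W" and ne: "X \<noteq> {}" and nW: "X \<noteq> W"
  shows "card X < card {y. \<exists>f\<in>F. \<exists>x\<in>X. ends f = {x,y}}"
proof -
  define N where "N = {y. \<exists>f\<in>F. \<exists>x\<in>X. ends f = {x,y}}"
  have bpd: "U \<inter> W = {} \<and> U \<union> W = V" using bp unfolding bipartition_def by simp
  have d: "U \<inter> W = {}" and UV: "U \<subseteq> V" and WV: "W \<subseteq> V"
    using bpd by blast+
  have NU: "N \<subseteq> U"
  proof
    fix y assume "y \<in> N"
    hence "\<exists>f\<in>F. \<exists>x\<in>X. ends f = {x,y}" unfolding N_def by simp
    then obtain f x where f: "f \<in> F" "x \<in> X" "ends f = {x,y}" by blast
    have "x \<in> W" using f(2) XW by blast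
    thus "y \<in> U" using bip_edge[OF bp f(1) f(3)] by simp
  qed
  have "N \<subseteq> V" using NU UV by (rule subset_trans)
  hence finN: "finite N" using fin by (rule finite_subset)
  obtain x0 where x0: "x0 \<in> X" using ne by blast
  obtain z where z: "z \<in> W" "z \<notin> X" using nW XW by blast
  have "reach ends V F x0 z"
  proof -
    have "\<forall>x\<in>V. \<forall>y\<in>V. reach ends V F x y"
      using mc unfolding matching_covered_def connected_graph_def by simp
    moreover have "x0 \<in> V" "z \<in> V" using x0 z XW WV by auto
    ultimately show ?thesis by simp
  qed
  moreover have "z \<notin> X \<union> N" using z NU d by blast
  moreover have "x0 \<in> X \<union> N" using x0 by blast
  ultimately have "\<exists>a b. adj ends V F a b \<and> a \<in> X \<union> N \<and> b \<notin> X \<union> N"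
    unfolding reach_def using path_exit[of "adj ends V F" x0 z "\<lambda>v. v \<in> X \<union> N"] by simp
  then obtain a b where ab: "adj ends V F a b" "a \<in> X \<union> N" "b \<notin> X \<union> N"
    by blast
  from ab(1) have "a \<in> V \<and> b \<in> V \<and> (\<exists>g\<in>F. ends g = {a,b})" unfolding adj_def by simp
  then obtain g where g: "g \<in> F" "ends g = {a,b}" "a \<in> V" "b \<in> V" by blast
  have aN: "a \<in> N"
  proof (rule ccontr)
    assume "a \<notin> N"
    hence aX: "a \<in> X" using ab by blast
    have "\<exists>f\<in>F. \<exists>x'\<in>X. ends f = {x', b}" using g aX by blast
    hence "b \<in> N" unfolding N_def by simp
    thus False using ab by blast
  qed
  have aU: "a \<in> U" using aN NU by blast
  have bW: "b \<in> W" and bX: "b \<notin> X"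
  proof -
    have "b \<in> W" using bip_edge[OF bipartition_swap[OF bp] g(1), of a b] g(2) aU by blast
    thus "b \<in> W" .
    show "b \<notin> X" using ab by blast
  qed
  have "\<forall>f\<in>F. admissible ends V F f" using mc unfolding matching_covered_def by simp
  hence "admissible ends V F g" using g(1) by simp
  hence "\<exists>M. perfect_matching ends V F M \<and> g \<in> M" unfolding admissible_def by simp
  then obtain M where M: "perfect_matching ends V F M" "g \<in> M" by blast
  have MF: "M \<subseteq> F" and uq: "\<And>v. v \<in> V \<Longrightarrow> \<exists>!m. m \<in> M \<and> v \<in> ends m"
    using M(1) unfolding perfect_matching_def by simp_all
  define mm where "mm x = (THE m. m \<in> M \<and> x \<in> ends m)" for x
  have mm: "mm x \<in> M \<and> x \<in> ends (mm x)" if "x \<in> V" for x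
    unfolding mm_def using theI'[OF uq[OF that]] .
  define p where "p x = (SOME y. y \<in> U \<and> ends (mm x) = {x,y})" for x
  have p: "p x \<in> U \<and> ends (mm x) = {x, p x}" if "x \<in> X" for x
  proof -
    have xV: "x \<in> V" using that XW WV by blast
    have m1: "mm x \<in> F" using mm[OF xV] MF by blast
    from bp m1 obtain u' w' where "u' \<in> U" "w' \<in> W" "ends (mm x) = {u',w'}"
      unfolding bipartition_def by blast
    moreover have "x \<in> W" using that XW by blast
    ultimately have "x \<in> {u',w'}" "x \<noteq> u'" using mm[OF xV] d by auto
    hence "x = w'" by simp
    hence "u' \<in> U \<and> ends (mm x) = {x,u'}" using \<open>u' \<in> U\<close> \<open>ends (mm x) = {u',w'}\<close>
      by (simp add: insert_commute)
    hence "\<exists>y. y \<in> U \<and> ends (mm x) = {x,y}" by blast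
    thus ?thesis unfolding p_def by (rule someI_ex)
  qed
  have pN: "p x \<in> N - {a}" if xX: "x \<in> X" for x
  proof -
    have xV: "x \<in> V" using that XW WV by blast
    have "mm x \<in> F" using mm[OF xV] MF by blast
    hence "\<exists>f\<in>F. \<exists>x'\<in>X. ends f = {x', p x}" using p[OF xX] xX by blast
    hence "p x \<in> N" unfolding N_def by simp
    moreover have "p x \<noteq> a"
    proof
      assume pa: "p x = a"
      have "a \<in> ends (mm x)" using p[OF xX] pa by simp
      hence "mm x \<in> M \<and> a \<in> ends (mm x)" using mm[OF xV] by blast
      moreover have "g \<in> M \<and> a \<in> ends g" using M(2) g(2) by simp
      ultimately have "mm x = g" by (rule uniq[OF uq[OF g(3)]])
      hence "x \<in> {a,b}" using mm[OF xV] g(2) by simp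
      moreover have "x \<noteq> a" using aU xX XW d by blast
      ultimately show False using bX xX by blast
    qed
    ultimately show ?thesis by blast
  qed
  have inj: "inj_on p X"
  proof (rule inj_onI)
    fix x1 x2 assume x1: "x1 \<in> X" and x2: "x2 \<in> X" and eq: "p x1 = p x2"
    have x1V: "x1 \<in> V" and x2V: "x2 \<in> V" using x1 x2 XW WV by auto
    have pV: "p x1 \<in> V" using p[OF x1] UV by blast
    have "mm x1 \<in> M \<and> p x1 \<in> ends (mm x1)" using p[OF x1] mm[OF x1V] by simp
    moreover have "mm x2 \<in> M \<and> p x1 \<in> ends (mm x2)" using p[OF x2] mm[OF x2V] eq by simp
    ultimately have "mm x1 = mm x2" by (rule uniq[OF uq[OF pV]])
    hence "x2 \<in> {x1, p x1}" using mm[OF x2V] p[OF x1] by simp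
    moreover have "x2 \<noteq> p x1" using p[OF x1] x2 XW d by blast
    ultimately show "x1 = x2" by blast
  qed
  have "card X \<le> card (N - {a})"
  proof (rule card_inj_on_le[OF inj])
    show "p ` X \<subseteq> N - {a}" using pN by blast
    show "finite (N - {a})" using finN by simp
  qed
  moreover have "card (N - {a}) < card N" using finN aN by (rule card_Diff1_less)
  ultimately show ?thesis unfolding N_def by linarith
qed

lemma comp_single:
  assumes "{x} \<in> components ends S F" "y \<in> S" "adj ends S F x y"
  shows "y = x"
proof -
  from assms(1) obtain z where z: "z \<in> S" "{x} = {y\<in>S. reach ends S F z y}"
    unfolding components_def by blast
  have "z \<in> {x}" using z unfolding reach_def by auto
  hence "z = x" by blast
  have "reach ends S F x y" using assms(3) unfolding reach_def by auto
  hence "y \<in> {x}" using z \<open>z = x\<close> assms(2) by blast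
  thus ?thesis by blast
qed

lemma comp_single_in:
  assumes "{x} \<in> components ends S F" shows "x \<in> S"
  using assms unfolding components_def by auto

lemma side_bound:
  assumes mc: "matching_covered ends V F" and bp: "bipartition ends V F U W"
    and fin: "finite V" and FE: "F \<subseteq> E'"
    and e_ends: "ends e = {u, w}" and uU: "u \<in> U" and wW: "w \<in> W"
    and BW: "B \<inter> W \<noteq> {}"
  shows "card {x \<in> W. {x} \<in> components ends (V - B) (avoid ends (E' - {e}) B)} \<le> card (B \<inter> U)"
proof -
  define W1 where "W1 = {x \<in> W. {x} \<in> components ends (V - B) (avoid ends (E' - {e}) B)}"
  have bpd: "U \<inter> W = {} \<and> U \<union> W = V" using bp unfolding bipartition_def by simp
  have d: "U \<inter> W = {}" and UV: "U \<subseteq> V" and WV: "W \<subseteq> V"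
    using bpd by blast+
  have W1c: "x \<in> W \<and> {x} \<in> components ends (V - B) (avoid ends (E' - {e}) B)" if "x \<in> W1" for x
    using that unfolding W1_def by simp
  have W1B: "W1 \<subseteq> V - B"
  proof
    fix x assume "x \<in> W1"
    thus "x \<in> V - B" using W1c comp_single_in by metis
  qed
  have W1W: "W1 \<subseteq> W" using W1c by blast
  show ?thesis
  proof (cases "W1 = {}")
    case True
    have "card {x \<in> W. {x} \<in> components ends (V - B) (avoid ends (E' - {e}) B)} = 0"
      using True unfolding W1_def by (simp only: card.empty)
    thus ?thesis by simp
  next
    case False
    obtain b0 where b0: "b0 \<in> B" "b0 \<in> W" using BW by blast
    have "b0 \<notin> W1" using W1B b0(1) by blast
    hence "W1 \<noteq> W" using b0(2) by blast
    hence lt: "card W1 < card {y. \<exists>f\<in>F. \<exists>x\<in>W1. ends f = {x,y}}"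
      by (rule hall_strict[OF mc bp fin W1W False])
    have sub: "{y. \<exists>f\<in>F. \<exists>x\<in>W1. ends f = {x,y}} \<subseteq> insert u (B \<inter> U)"
    proof
      fix y assume "y \<in> {y. \<exists>f\<in>F. \<exists>x\<in>W1. ends f = {x,y}}"
      hence "\<exists>f\<in>F. \<exists>x\<in>W1. ends f = {x,y}" by simp
      then obtain f x where f: "f \<in> F" "x \<in> W1" "ends f = {x,y}" by blast
      have xW: "x \<in> W" using W1c[OF f(2)] by simp
      have xc: "{x} \<in> components ends (V - B) (avoid ends (E' - {e}) B)" using W1c[OF f(2)] by simp
      have yU: "y \<in> U" and xy: "x \<noteq> y" using bip_edge[OF bp f(1) f(3) xW] by auto
      show "y \<in> insert u (B \<inter> U)"
      proof (cases "f = e")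
        case True
        hence "{x,y} = {u,w}" using f e_ends by simp
        hence "y \<in> {u,w}" by blast
        moreover have "y \<noteq> w" using yU wW d by blast
        ultimately have "y = u" by simp
        thus ?thesis by simp
      next
        case fe: False
        show ?thesis
        proof (rule ccontr)
          assume "y \<notin> insert u (B \<inter> U)"
          hence yB: "y \<notin> B" using yU by blast
          have xB: "x \<in> V - B" using f(2) W1B by blast
          have yV: "y \<in> V - B" using yU UV yB by blast
          have "ends f \<inter> B = {}" using f(3) xB yB by simp
          moreover have "f \<in> E' - {e}" using f(1) FE fe by blast
          ultimately have "f \<in> avoid ends (E' - {e}) B" unfolding avoid_def by simp
          hence "\<exists>g\<in>avoid ends (E' - {e}) B. ends g = {x,y}" using f(3) by blast
          hence "adj ends (V - B) (avoid ends (E' - {e}) B) x y"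
            unfolding adj_def using xB yV by simp
          hence "y = x" by (rule comp_single[OF xc yV])
          thus False using xy by simp
        qed
      qed
    qed
    have "insert u (B \<inter> U) \<subseteq> V" using UV uU by blast
    hence fi: "finite (insert u (B \<inter> U))" using fin by (rule finite_subset)
    have "card {y. \<exists>f\<in>F. \<exists>x\<in>W1. ends f = {x,y}} \<le> card (insert u (B \<inter> U))"
      by (rule card_mono[OF fi sub])
    also have "\<dots> \<le> Suc (card (B \<inter> U))" using fi by (simp add: card_insert_if)
    finally show ?thesis using lt unfolding W1_def by linarith
  qed
qed

theorem mainTheorem9:
  fixes ends :: "'e \<Rightarrow> 'a set" and V :: "'a set" and E :: "'e set"
    and e1 e2 e estar :: 'e and U W B :: "'a set" and u w :: 'a
  assumes graph: "multigraph ends V E"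
    and brick: "brick ends V E"
    and doubleton: "removable_doubleton ends V E e1 e2"
    and bip: "bipartition ends V (E - {e1, e2}) U W"
    and e1U: "ends e1 \<subseteq> U" and e2W: "ends e2 \<subseteq> W"
    and e_in: "e \<in> E - {e1, e2}"
    and e_nonrem_G: "nonremovable ends V E e"
    and e_nonrem_H: "nonremovable ends V (E - {e1, e2}) e"
    and e_ends: "ends e = {u, w}" and uU: "u \<in> U" and wW: "w \<in> W"
    and estar_in: "estar \<in> (E - {e1, e2}) - {e}"
    and estar_G: "\<not> admissible ends V (E - {e}) estar"
    and estar_H: "\<not> admissible ends V ((E - {e1, e2}) - {e}) estar"
    and B_barrier: "barrier ends V (E - {e}) B"
    and B_estar: "ends estar \<subseteq> B"
    and B_max: "\<And>B'. barrier ends V (E - {e}) B' \<Longrightarrow> B \<subseteq> B' \<Longrightarrow> B' = B"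
  shows "B \<inter> U \<noteq> {} \<and> B \<inter> W \<noteq> {} \<and>
    card {x \<in> W. {x} \<in> components ends (V - B) (avoid ends (E - {e}) B)} \<le> card (B \<inter> U) \<and>
    card {x \<in> U. {x} \<in> components ends (V - B) (avoid ends (E - {e}) B)} \<le> card (B \<inter> W)"
proof -
  have mc: "matching_covered ends V (E - {e1, e2})"
    using doubleton unfolding removable_doubleton_def by simp
  have fin: "finite V" using graph unfolding multigraph_def by simp
  have est: "estar \<in> E - {e1, e2}" using estar_in by simp
  from bip have "\<forall>f\<in>E - {e1, e2}. \<exists>a\<in>U. \<exists>b\<in>W. ends f = {a, b}"
    unfolding bipartition_def by simp
  then obtain a b where ab: "a \<in> U" "b \<in> W" "ends estar = {a,b}" using est by blast
  have "a \<in> B" "b \<in> B" using B_estar ab(3) by auto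
  hence BU: "B \<inter> U \<noteq> {}" and BW: "B \<inter> W \<noteq> {}" using ab by blast+
  have sub: "E - {e1, e2} \<subseteq> E" by blast
  have 1: "card {x \<in> W. {x} \<in> components ends (V - B) (avoid ends (E - {e}) B)} \<le> card (B \<inter> U)"
    by (rule side_bound[OF mc bip fin sub e_ends uU wW BW])
  have e_ends': "ends e = {w, u}" using e_ends by (simp add: insert_commute)
  have 2: "card {x \<in> U. {x} \<in> components ends (V - B) (avoid ends (E - {e}) B)} \<le> card (B \<inter> W)"
    by (rule side_bound[OF mc bipartition_swap[OF bip] fin sub e_ends' wW uU BU])
  show ?thesis using BU BW 1 2 by simp
qed

end
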